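(* Let $J_-,J_+\subset\mathbb Z$ be disjoint finite arithmetic progressions with the same common difference, $J=J_-\cup J_+$. For a generic twisted $J$-corrugated $n$-gon with corresponding operator $\mathcal D\in\mathrm{DO}_n(J)$, the Lax operator $\mathcal L(z):=\mathcal D_-(z)^{-1}\mathcal D_+(z)$ is a well-defined element of $\widetilde{\mathrm{GL}}_n/(\mathrm{Ad}\,\mathbb T\times\mathbb R^* )$, i.e. it does not depend, modulo conjugation by constant invertible diagonal matrices and the substitutions $z\mapsto tz$ ($t\in\mathbb R^*$), on the choice of $\mathcal D$ corresponding to the polygon nor on the representative of the projective equivalence class.
   Context: A scalar operator is a bi-infinite real sequence $a=(a_i)$ acting by $(aV)_i=a_iV_i$; $T$ is the left shift. An $n$-periodic difference operator is a finite sum $\sum_j a^{(j)}T^j$ with $n$-periodic coefficients; $\mathrm{DO}_n(J)$ consists of those of the form $\sum_{j\in J}a^{(j)}T^j$; for $\mathcal D=\sum_{j\in J}a^{(j)}T^j$ put $\mathcal D_\pm=\sum_{j\in J_\pm}a^{(j)}T^j$. $\mathcal D(z)$ is the matrix Laurent polynomial obtained by sending a scalar operator $a$ to $\mathrm{diag}(a_1,\dots,a_n)$ and $T$ to the $n\times n$ matrix with $1$'s at positions $(i,i+1)$ and $z$ at position $(n,1)$. $\widetilde{\mathrm{GL}}_n$ is the group of invertible matrix-valued rational functions of $z$. For $d=\max J-\min J-1$, a twisted $J$-corrugated $n$-gon is a sequence $v_i\in\mathbb{RP}^d$ with $v_{i+n}=M(v_i)$ ($M$ projective) such that for each $i$ the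 points $v_{i+j}$, $j\in J$, lie in a projective subspace of dimension $|J|-2$; $\mathcal D$ corresponds to it if $\mathcal DV=0$ for some lift $V_i\in\mathbb R^{d+1}$ of $v_i$. Such $\mathcal D$ is determined up to $\mathcal D\mapsto a\mathcal Db^{-1}$ with $a,b$ invertible $n$-quasiperiodic scalar operators with the same monodromy. *)

theory Defs
  imports Complex_Main "Jordan_Normal_Form.Gauss_Jordan_Elimination" "Jordan_Normal_Form.Determinant"
begin

(* Scalar operators: bi-infinite real sequences  int => real.
   A difference operator sum_{j in J} a^(j) T^j is represented by its support J
   together with the coefficient family  D :: int => int => real,  D j i = a^(j)_i.
   Its action: (D V)_i = sum_{j in J} D j i * V (i+j). *)

definition periodic_seq :: "nat \<Rightarrow> (int \<Rightarrow> real) \<Rightarrow> bool" where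
  "periodic_seq n a \<longleftrightarrow> (\<forall>i. a (i + int n) = a i)"

definition quasiperiodic_inv :: "nat \<Rightarrow> real \<Rightarrow> (int \<Rightarrow> real) \<Rightarrow> bool" where
  "quasiperiodic_inv n m a \<longleftrightarrow> (\<forall>i. a (i + int n) = m * a i) \<and> (\<forall>i. a i \<noteq> 0)"

definition DO :: "nat \<Rightarrow> int set \<Rightarrow> (int \<Rightarrow> int \<Rightarrow> real) \<Rightarrow> bool" where
  "DO n J D \<longleftrightarrow> (\<forall>j\<in>J. periodic_seq n (D j))"

(* the operator  a D b^{-1}  (coefficients: (a D b^{-1})^(j)_i = a_i a^(j)_i / b_(i+j)) *)
definition gauge :: "(int \<Rightarrow> real) \<Rightarrow> (int \<Rightarrow> int \<Rightarrow> real) \<Rightarrow> (int \<Rightarrow> real) \<Rightarrow> (int \<Rightarrow> int \<Rightarrow> real)" where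
  "gauge a D b = (\<lambda>j i. a i * D j i / b (i + j))"

definition arith_prog :: "int \<Rightarrow> int set \<Rightarrow> bool" where
  "arith_prog d P \<longleftrightarrow> d > 0 \<and> (\<exists>s l. l \<ge> 1 \<and> P = {s + int k * d | k. k < l})"

(* matrix inverse (zero matrix if not invertible) *)
definition minv :: "real mat \<Rightarrow> real mat" where
  "minv A = (case mat_inverse A of Some B \<Rightarrow> B | None \<Rightarrow> 0\<^sub>m (dim_row A) (dim_col A))"

(* T(z): 1's at positions (i,i+1), z at (n,1)  (0-based indices here) *)
definition Tmat :: "nat \<Rightarrow> real \<Rightarrow> real mat" where
  "Tmat n z = mat n n (\<lambda>(r,c). if r + 1 < n \<and> c = r + 1 then 1
                               else if r + 1 = n \<and> c = 0 then z else 0)"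

definition Tpow :: "nat \<Rightarrow> real \<Rightarrow> int \<Rightarrow> real mat" where
  "Tpow n z j = (if 0 \<le> j then Tmat n z ^\<^sub>m nat j else minv (Tmat n z) ^\<^sub>m nat (- j))"

definition opmat :: "nat \<Rightarrow> int set \<Rightarrow> (int \<Rightarrow> int \<Rightarrow> real) \<Rightarrow> real \<Rightarrow> real mat" where
  "opmat n J D z = mat n n (\<lambda>(r,c). \<Sum>j\<in>J. D j (int r + 1) * Tpow n z j $$ (r,c))"

definition Lax :: "nat \<Rightarrow> int set \<Rightarrow> int set \<Rightarrow> (int \<Rightarrow> int \<Rightarrow> real) \<Rightarrow> real \<Rightarrow> real mat" where
  "Lax n Jm Jp D z = minv (opmat n Jm D z) * opmat n Jp D z"

definition inv_diag :: "nat \<Rightarrow> real mat \<Rightarrow> bool" where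
  "inv_diag n C \<longleftrightarrow> C \<in> carrier_mat n n \<and> (\<forall>r<n. \<forall>c<n. r \<noteq> c \<longrightarrow> C $$ (r,c) = 0)
                    \<and> (\<forall>r<n. C $$ (r,r) \<noteq> 0)"

(* a matrix-valued rational function is invertible (in GL~_n) iff its determinant is
   not identically zero; equality of rational functions = equality off a finite set *)
definition generic_inv :: "(real \<Rightarrow> real mat) \<Rightarrow> bool" where
  "generic_inv F \<longleftrightarrow> (\<exists>z. det (F z) \<noteq> 0)"

end

theory Submission imports Defs begin

lemma mult_entry: assumes "X \<in> carrier_mat n n" "Y \<in> carrier_mat n n" "r < n" "c < n"
  shows "(X * Y) $$ (r,c) = (\<Sum>l\<in>{0..<n}. X $$ (r,l) * Y $$ (l,c))"
  using assms by (simp add: scalar_prod_def)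

lemma Tmat_carrier[simp]: "Tmat n z \<in> carrier_mat n n" by (simp add: Tmat_def)

lemma mult_T: assumes X: "X \<in> carrier_mat n n" and "r < n" "c < n"
  shows "(X * Tmat n z) $$ (r,c) = (if 1 \<le> c then X $$ (r, c - 1) else z * X $$ (r, n - 1))"
proof -
  have "(X * Tmat n z) $$ (r,c) = (\<Sum>l\<in>{0..<n}. X $$ (r,l) * Tmat n z $$ (l,c))"
    using mult_entry[OF X Tmat_carrier assms(2,3)] .
  also have "\<dots> = (\<Sum>l\<in>{0..<n}. if l = (if 1 \<le> c then c - 1 else n - 1) then
       (if 1 \<le> c then X $$ (r, c - 1) else z * X $$ (r, n - 1)) else 0)"
    by (rule sum.cong, auto simp: Tmat_def assms)
  also have "\<dots> = (if 1 \<le> c then X $$ (r, c - 1) else z * X $$ (r, n - 1))"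
    using assms by (subst sum.delta, auto)
  finally show ?thesis .
qed

definition Umat :: "nat \<Rightarrow> real \<Rightarrow> real mat" where
  "Umat n z = mat n n (\<lambda>(r,c). if r = c + 1 then 1 else if r = 0 \<and> c + 1 = n then 1 / z else 0)"

lemma Umat_carrier[simp]: "Umat n z \<in> carrier_mat n n" by (simp add: Umat_def)

lemma mult_U: assumes X: "X \<in> carrier_mat n n" and "r < n" "c < n"
  shows "(X * Umat n z) $$ (r,c) = (if c + 1 < n then X $$ (r, c + 1) else X $$ (r, 0) / z)"
proof -
  have "(X * Umat n z) $$ (r,c) = (\<Sum>l\<in>{0..<n}. X $$ (r,l) * Umat n z $$ (l,c))"
    using mult_entry[OF X Umat_carrier assms(2,3)] .
  also have "\<dots> = (\<Sum>l\<in>{0..<n}. if l = (if c + 1 < n then c + 1 else 0) then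
       (if c + 1 < n then X $$ (r, c + 1) else X $$ (r, 0) / z) else 0)"
    using assms by (intro sum.cong, auto simp: Umat_def)
  also have "\<dots> = (if c + 1 < n then X $$ (r, c + 1) else X $$ (r, 0) / z)"
    using assms by (subst sum.delta, auto)
  finally show ?thesis .
qed

lemma TU: assumes "z \<noteq> 0" shows "Tmat n z * Umat n z = 1\<^sub>m n" "Umat n z * Tmat n z = 1\<^sub>m n"
   by (rule eq_matI; auto simp: mult_U mult_T assms; auto simp: Tmat_def Umat_def assms)+

lemma minv_eq: assumes A: "A \<in> carrier_mat n n" and B: "B \<in> carrier_mat n n"
  and AB: "A * B = 1\<^sub>m n" and BA: "B * A = 1\<^sub>m n"
  shows "minv A = B"
proof (cases "mat_inverse A")
  case None
  from mat_inverse(1)[OF A None, of "()"] A B AB BA show ?thesis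
    by (auto simp: Units_def ring_mat_simps)
next
  case (Some C)
  from mat_inverse(2)[OF A Some] have C: "A * C = 1\<^sub>m n" "C * A = 1\<^sub>m n" "C \<in> carrier_mat n n" by auto
  have "C = C * (A * B)" using C(3) AB by (simp add: right_mult_one_mat)
  also have "\<dots> = (C * A) * B" using A B C(3) by (simp only: assoc_mult_mat)
  also have "\<dots> = B" using C B by (simp add: left_mult_one_mat)
  finally show ?thesis using Some by (simp add: minv_def)
qed

lemma minv_none: assumes A: "A \<in> carrier_mat n n"
  and no: "\<not> (\<exists>B\<in>carrier_mat n n. A * B = 1\<^sub>m n \<and> B * A = 1\<^sub>m n)"
  shows "minv A = 0\<^sub>m n n"
proof (cases "mat_inverse A")
  case None
  then show ?thesis using A by (simp add: minv_def)
next
  case (Some C)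
  from mat_inverse(2)[OF A Some] no show ?thesis by auto
qed

lemma minv_carrier: assumes A: "A \<in> carrier_mat n n" shows "minv A \<in> carrier_mat n n"
proof (cases "mat_inverse A")
  case None
  then show ?thesis using A by (simp add: minv_def)
next
  case (Some C)
  from mat_inverse(2)[OF A Some] Some show ?thesis by (simp add: minv_def)
qed

lemma minv_T: "z \<noteq> 0 \<Longrightarrow> minv (Tmat n z) = Umat n z"
  by (rule minv_eq[OF Tmat_carrier Umat_carrier TU])

lemma minv_T0: assumes "n \<ge> 1" shows "minv (Tmat n 0) = 0\<^sub>m n n"
proof (rule minv_none[OF Tmat_carrier], rule notI)
  assume "\<exists>B\<in>carrier_mat n n. Tmat n 0 * B = 1\<^sub>m n \<and> B * Tmat n 0 = 1\<^sub>m n"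
  then obtain B where B: "B \<in> carrier_mat n n" "B * Tmat n 0 = 1\<^sub>m n" by auto
  have "(B * Tmat n 0) $$ (0,0) = 0" using mult_T[OF B(1), of 0 0 0] assms by simp
  with B(2) assms show False by simp
qed

lemma zero_pow: "k \<ge> 1 \<Longrightarrow> (0\<^sub>m n n :: real mat) ^\<^sub>m k = 0\<^sub>m n n"
proof (induction k)
  case 0 then show ?case by simp
next
  case (Suc k)
  have "(0\<^sub>m n n :: real mat) ^\<^sub>m k \<in> carrier_mat n n" by simp
  then show ?case by simp
qed

lemma Tpow_pos:
  assumes m: "m \<noteq> 0" and bq: "\<forall>i. b (i + int n) = m * b i" and n: "n \<ge> 1"
  shows "\<forall>r c s. r < n \<longrightarrow> c < n \<longrightarrow>
    (Tmat n z ^\<^sub>m k) $$ (r,c) * b (int c + 1 + s) = b (int r + 1 + int k + s) * (Tmat n (z/m) ^\<^sub>m k) $$ (r,c)"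
proof (induction k)
  case 0
  then show ?case by (auto simp: Tmat_def Umat_def)
next
  case (Suc k)
  show ?case
  proof (intro allI impI)
    fix r c s assume r: "r < n" and c: "c < n"
    have X: "Tmat n z ^\<^sub>m k \<in> carrier_mat n n" "Tmat n (z/m) ^\<^sub>m k \<in> carrier_mat n n" by auto
    show "(Tmat n z ^\<^sub>m Suc k) $$ (r,c) * b (int c + 1 + s) = b (int r + 1 + int (Suc k) + s) * (Tmat n (z/m) ^\<^sub>m Suc k) $$ (r,c)"
    proof (cases "1 \<le> c")
      case True
      have e1: "int (c - 1) + 1 + (s + 1) = int c + 1 + s" using True by simp
      have e2: "int r + 1 + int k + (s+1) = int r + 1 + int (Suc k) + s" by simp
      have c1: "c - 1 < n" using c by simp
      have IH: "(Tmat n z ^\<^sub>m k) $$ (r,c-1) * b (int c + 1 + s) = b (int r + 1 + int (Suc k) + s) * (Tmat n (z/m) ^\<^sub>m k) $$ (r,c-1)"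
        using Suc.IH[rule_format, OF r c1, of "s + 1"] unfolding e1 e2 .
      show ?thesis using IH True
        by (simp add: mult_T[OF X(1) r c] mult_T[OF X(2) r c])
    next
      case False
      have e1: "int (n - 1) + 1 + (s + 1) = (1 + s) + int n" using n by simp
      have e2: "int r + 1 + int k + (s+1) = int r + 1 + int (Suc k) + s" by simp
      have IH: "(Tmat n z ^\<^sub>m k) $$ (r,n-1) * (m * b (1 + s)) = b (int r + 1 + int (Suc k) + s) * (Tmat n (z/m) ^\<^sub>m k) $$ (r,n-1)"
      proof -
        have n1: "n - 1 < n" using n by simp
        show ?thesis using Suc.IH[rule_format, OF r n1, of "s + 1"] unfolding e1 e2 bq[rule_format, of "1+s"] .
      qed
      have "(Tmat n z ^\<^sub>m Suc k) $$ (r,c) * b (int c + 1 + s) = z * (Tmat n z ^\<^sub>m k) $$ (r,n-1) * b (1 + s)"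
      proof -
        have c0: "c = 0" using False by simp
        show ?thesis using mult_T[OF X(1) r c] c0 by simp
      qed
      also have "\<dots> = (z / m) * ((Tmat n z ^\<^sub>m k) $$ (r,n-1) * (m * b (1 + s)))"
        using m by (simp add: field_simps)
      also have "\<dots> = (z / m) * (b (int r + 1 + int (Suc k) + s) * (Tmat n (z/m) ^\<^sub>m k) $$ (r,n-1))"
        unfolding IH ..
      also have "\<dots> = b (int r + 1 + int (Suc k) + s) * (Tmat n (z/m) ^\<^sub>m Suc k) $$ (r,c)"
      proof -
        have c0: "c = 0" using False by simp
        show ?thesis using mult_T[OF X(2) r c] c0 by simp
      qed
      finally show ?thesis .
    qed
  qed
qed

lemma Upow:
  assumes m: "m \<noteq> 0" and bq: "\<forall>i. b (i + int n) = m * b i" and n: "n \<ge> 1" and z: "z \<noteq> 0"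
  shows "\<forall>r c s. r < n \<longrightarrow> c < n \<longrightarrow>
    (Umat n z ^\<^sub>m k) $$ (r,c) * b (int c + 1 + s) = b (int r + 1 - int k + s) * (Umat n (z/m) ^\<^sub>m k) $$ (r,c)"
proof (induction k)
  case 0
  then show ?case by (auto simp: Tmat_def Umat_def)
next
  case (Suc k)
  show ?case
  proof (intro allI impI)
    fix r c s assume r: "r < n" and c: "c < n"
    have X: "Umat n z ^\<^sub>m k \<in> carrier_mat n n" "Umat n (z/m) ^\<^sub>m k \<in> carrier_mat n n" by auto
    show "(Umat n z ^\<^sub>m Suc k) $$ (r,c) * b (int c + 1 + s) = b (int r + 1 - int (Suc k) + s) * (Umat n (z/m) ^\<^sub>m Suc k) $$ (r,c)"
    proof (cases "c + 1 < n")
      case True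
      have e1: "int (c + 1) + 1 + (s - 1) = int c + 1 + s" by simp
      have e2: "int r + 1 - int k + (s - 1) = int r + 1 - int (Suc k) + s" by simp
      have c1: "c + 1 < n" using True by simp
      have IH: "(Umat n z ^\<^sub>m k) $$ (r,c+1) * b (int c + 1 + s) = b (int r + 1 - int (Suc k) + s) * (Umat n (z/m) ^\<^sub>m k) $$ (r,c+1)"
        using Suc.IH[rule_format, OF r c1, of "s - 1"] unfolding e1 e2 .
      show ?thesis using IH True
        by (simp add: mult_U[OF X(1) r c] mult_U[OF X(2) r c])
    next
      case False
      have cn: "int c + 1 + s = s + int n" using False c by simp
      have e1: "int 0 + 1 + (s - 1) = s" by simp
      have e2: "int r + 1 - int k + (s - 1) = int r + 1 - int (Suc k) + s" by simp
      have IH: "(Umat n z ^\<^sub>m k) $$ (r,0) * b s = b (int r + 1 - int (Suc k) + s) * (Umat n (z/m) ^\<^sub>m k) $$ (r,0)"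
      proof -
        have n1: "0 < n" using n by simp
        show ?thesis using Suc.IH[rule_format, OF r n1, of "s - 1"] unfolding e1 e2 .
      qed
      have "(Umat n z ^\<^sub>m Suc k) $$ (r,c) * b (int c + 1 + s) = (Umat n z ^\<^sub>m k) $$ (r,0) / z * (m * b s)"
        using False by (simp add: mult_U[OF X(1) r c] cn bq)
      also have "\<dots> = (m / z) * ((Umat n z ^\<^sub>m k) $$ (r,0) * b s)"
        using m by (simp add: field_simps)
      also have "\<dots> = (m / z) * (b (int r + 1 - int (Suc k) + s) * (Umat n (z/m) ^\<^sub>m k) $$ (r,0))"
        unfolding IH ..
      also have "\<dots> = b (int r + 1 - int (Suc k) + s) * (Umat n (z/m) ^\<^sub>m Suc k) $$ (r,c)"
        using False m z by (simp add: mult_U[OF X(2) r c] field_simps)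
      finally show ?thesis .
    qed
  qed
qed

lemma Tpow_rel:
  assumes m: "m \<noteq> 0" and bq: "\<forall>i. b (i + int n) = m * b i" and n: "n \<ge> 1"
    and r: "r < n" and c: "c < n"
  shows "Tpow n z j $$ (r,c) * b (int c + 1) = b (int r + 1 + j) * Tpow n (z/m) j $$ (r,c)"
proof (cases "0 \<le> j")
  case True
  then show ?thesis using Tpow_pos[OF m bq n, rule_format, OF r c, of z "nat j" 0]
    by (simp add: Tpow_def)
next
  case False
  show ?thesis
  proof (cases "z = 0")
    case True
    have "nat (-j) \<ge> 1" using False by simp
    then show ?thesis using False True n r c by (simp add: Tpow_def minv_T0 zero_pow)
  next
    case z: False
    have zm: "z / m \<noteq> 0" using z m by simp
    show ?thesis using False Upow[OF m bq n z, rule_format, OF r c, of "nat (-j)" 0]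
      by (simp add: Tpow_def minv_T[OF z] minv_T[OF zm])
  qed
qed


definition dg :: "nat \<Rightarrow> (nat \<Rightarrow> real) \<Rightarrow> real mat" where
  "dg n f = mat n n (\<lambda>(r,c). if r = c then f r else 0)"

lemma dg_carrier[simp]: "dg n f \<in> carrier_mat n n" by (simp add: dg_def)

lemma dg_left: assumes M: "M \<in> carrier_mat n n" and "r < n" "c < n"
  shows "(dg n f * M) $$ (r,c) = f r * M $$ (r,c)"
proof -
  have "(dg n f * M) $$ (r,c) = (\<Sum>l\<in>{0..<n}. dg n f $$ (r,l) * M $$ (l,c))"
    using mult_entry[OF dg_carrier M assms(2,3)] .
  also have "\<dots> = (\<Sum>l\<in>{0..<n}. if l = r then f r * M $$ (r,c) else 0)"
    using assms by (intro sum.cong, auto simp: dg_def)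
  finally show ?thesis using assms by simp
qed

lemma dg_right: assumes M: "M \<in> carrier_mat n n" and "r < n" "c < n"
  shows "(M * dg n f) $$ (r,c) = M $$ (r,c) * f c"
proof -
  have "(M * dg n f) $$ (r,c) = (\<Sum>l\<in>{0..<n}. M $$ (r,l) * dg n f $$ (l,c))"
    using mult_entry[OF M dg_carrier assms(2,3)] .
  also have "\<dots> = (\<Sum>l\<in>{0..<n}. if l = c then M $$ (r,c) * f c else 0)"
    using assms by (intro sum.cong, auto simp: dg_def)
  finally show ?thesis using assms by simp
qed

lemma dim_dg[simp]: "dim_row (dg n f) = n" "dim_col (dg n f) = n" by (auto simp: dg_def)

lemma dg_mult: "dg n f * dg n g = dg n (\<lambda>i. f i * g i)"
proof (rule eq_matI)
  fix i j assume "i < dim_row (dg n (\<lambda>i. f i * g i))" "j < dim_col (dg n (\<lambda>i. f i * g i))"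
  then have i: "i < n" and j: "j < n" by auto
  show "(dg n f * dg n g) $$ (i, j) = dg n (\<lambda>i. f i * g i) $$ (i, j)"
    using dg_left[OF dg_carrier i j] i j by (simp add: dg_def)
qed auto

lemma dg_inv: assumes "\<forall>i<n. f i \<noteq> 0"
  shows "dg n f * dg n (\<lambda>i. 1 / f i) = 1\<^sub>m n" "dg n (\<lambda>i. 1 / f i) * dg n f = 1\<^sub>m n"
  unfolding dg_mult using assms by (auto simp: dg_def intro!: eq_matI)

lemma opmat_carrier[simp]: "opmat n J D z \<in> carrier_mat n n" by (simp add: opmat_def)

lemma opmat_gauge:
  assumes m: "m \<noteq> 0" and bq: "\<forall>i. b (i + int n) = m * b i" and n: "n \<ge> 1"
    and bnz: "\<forall>i. b i \<noteq> 0"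
  shows "opmat n J (gauge a D b) z = dg n (\<lambda>r. a (int r + 1)) * opmat n J D (z/m) * dg n (\<lambda>c. 1 / b (int c + 1))"
proof (rule eq_matI)
  fix r c assume r: "r < dim_row (dg n (\<lambda>r. a (int r + 1)) * opmat n J D (z/m) * dg n (\<lambda>c. 1 / b (int c + 1)))"
    and c: "c < dim_col (dg n (\<lambda>r. a (int r + 1)) * opmat n J D (z/m) * dg n (\<lambda>c. 1 / b (int c + 1)))"
  have r': "r < n" and c': "c < n" using r c by auto
  have M: "dg n (\<lambda>r. a (int r + 1)) * opmat n J D (z/m) \<in> carrier_mat n n"
    by (rule mult_carrier_mat[OF dg_carrier opmat_carrier])
  have rhs: "(dg n (\<lambda>r. a (int r + 1)) * opmat n J D (z/m) * dg n (\<lambda>c. 1 / b (int c + 1))) $$ (r,c)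
     = a (int r + 1) * opmat n J D (z/m) $$ (r,c) * (1 / b (int c + 1))"
    by (simp add: dg_right[OF M r' c'] dg_left[OF opmat_carrier r' c'])
  have tm: "gauge a D b j (int r + 1) * Tpow n z j $$ (r,c) =
      a (int r + 1) * (D j (int r + 1) * Tpow n (z/m) j $$ (r,c)) * (1 / b (int c + 1))" for j
  proof -
    have key: "Tpow n z j $$ (r,c) * b (int c + 1) = b (int r + 1 + j) * Tpow n (z/m) j $$ (r,c)"
      by (rule Tpow_rel[OF m bq n r' c'])
    have b1: "b (int c + 1) \<noteq> 0" "b (int r + 1 + j) \<noteq> 0" using bnz by auto
    have "Tpow n z j $$ (r,c) = b (int r + 1 + j) * Tpow n (z/m) j $$ (r,c) / b (int c + 1)"
      using key b1 by (simp add: field_simps)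
    then show ?thesis using b1 by (simp add: gauge_def field_simps)
  qed
  show "opmat n J (gauge a D b) z $$ (r,c) = (dg n (\<lambda>r. a (int r + 1)) * opmat n J D (z/m) * dg n (\<lambda>c. 1 / b (int c + 1))) $$ (r,c)"
    unfolding rhs using r' c' by (simp add: opmat_def tm sum_distrib_left sum_distrib_right sum_divide_distrib)
qed (auto simp: opmat_def)


lemma minv_conj:
  assumes A: "A \<in> carrier_mat n n" and Ai: "Ai \<in> carrier_mat n n"
    and B: "B \<in> carrier_mat n n" and Bi: "Bi \<in> carrier_mat n n"
    and M: "M \<in> carrier_mat n n"
    and AAi: "A * Ai = 1\<^sub>m n" and AiA: "Ai * A = 1\<^sub>m n"
    and BBi: "B * Bi = 1\<^sub>m n" and BiB: "Bi * B = 1\<^sub>m n"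
  shows "minv (A * M * Bi) = B * minv M * Ai"
proof -
  have mc: "\<And>X Y. X \<in> carrier_mat n n \<Longrightarrow> Y \<in> carrier_mat n n \<Longrightarrow> X * Y \<in> carrier_mat n n"
    by auto
  have as: "\<And>X Y Z. X \<in> carrier_mat n n \<Longrightarrow> Y \<in> carrier_mat n n \<Longrightarrow> Z \<in> carrier_mat n n \<Longrightarrow> X * Y * Z = X * (Y * Z)"
    by (rule assoc_mult_mat)
  show ?thesis
proof (cases "\<exists>W\<in>carrier_mat n n. M * W = 1\<^sub>m n \<and> W * M = 1\<^sub>m n")
  case True
  then obtain W where W: "W \<in> carrier_mat n n" "M * W = 1\<^sub>m n" "W * M = 1\<^sub>m n" by auto
  have mW: "minv M = W" by (rule minv_eq[OF M W])
  have e1: "(A * M * Bi) * (B * W * Ai) = 1\<^sub>m n"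
  proof -
    have "(A * M * Bi) * (B * W * Ai) = A * (M * (Bi * B) * W) * Ai"
      using A Ai B Bi M W by (simp add: as mc)
    also have "\<dots> = 1\<^sub>m n" using A M W BiB AAi by simp
    finally show ?thesis .
  qed
  have e2: "(B * W * Ai) * (A * M * Bi) = 1\<^sub>m n"
  proof -
    have "(B * W * Ai) * (A * M * Bi) = B * (W * (Ai * A) * M) * Bi"
      using A Ai B Bi M W by (simp add: as mc)
    also have "\<dots> = 1\<^sub>m n" using B M W AiA BBi by simp
    finally show ?thesis .
  qed
  have "minv (A * M * Bi) = B * W * Ai"
    by (rule minv_eq[OF _ _ e1 e2]) (use A B Ai Bi M W in auto)
  then show ?thesis using mW by simp
next
  case False
  have mM: "minv M = 0\<^sub>m n n" by (rule minv_none[OF M False])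
  have "\<not> (\<exists>Y\<in>carrier_mat n n. (A * M * Bi) * Y = 1\<^sub>m n \<and> Y * (A * M * Bi) = 1\<^sub>m n)"
  proof
    assume "\<exists>Y\<in>carrier_mat n n. (A * M * Bi) * Y = 1\<^sub>m n \<and> Y * (A * M * Bi) = 1\<^sub>m n"
    then obtain Y where Y: "Y \<in> carrier_mat n n" "(A * M * Bi) * Y = 1\<^sub>m n" "Y * (A * M * Bi) = 1\<^sub>m n" by auto
    have "M * (Bi * Y * A) = (Ai * A) * (M * Bi * Y) * A"
      using A Ai Bi M Y AiA by (simp add: as mc)
    also have "\<dots> = Ai * ((A * M * Bi) * Y) * A"
      using A Ai Bi M Y by (simp add: as mc)
    also have "\<dots> = 1\<^sub>m n" using Y A Ai AiA by simp
    finally have 1: "M * (Bi * Y * A) = 1\<^sub>m n" .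
    have "(Bi * Y * A) * M = Bi * (Y * (A * M * Bi)) * B"
      using A Ai Bi B M Y(1) by (simp add: as mc BiB)
    also have "\<dots> = 1\<^sub>m n" using Y Bi B BiB by simp
    finally have 2: "(Bi * Y * A) * M = 1\<^sub>m n" .
    from 1 2 False Y A Bi show False by auto
  qed
  then have "minv (A * M * Bi) = 0\<^sub>m n n"
    by (intro minv_none) (use A M Bi in auto)
  then show ?thesis using mM B Ai by simp
qed
qed


theorem mainTheorem7:
  fixes n :: nat and d :: int and Jm Jp :: "int set"
    and D :: "int \<Rightarrow> int \<Rightarrow> real" and a b :: "int \<Rightarrow> real" and m :: real
  assumes "n \<ge> 1"
    and "arith_prog d Jm" and "arith_prog d Jp" and "Jm \<inter> Jp = {}"
    and "DO n (Jm \<union> Jp) D"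
    and "generic_inv (opmat n Jm D)" and "generic_inv (opmat n Jp D)"
    and "quasiperiodic_inv n m a" and "quasiperiodic_inv n m b"
  shows "DO n (Jm \<union> Jp) (gauge a D b)
    \<and> generic_inv (opmat n Jm (gauge a D b)) \<and> generic_inv (opmat n Jp (gauge a D b))
    \<and> (\<exists>C t. inv_diag n C \<and> t \<noteq> 0 \<and>
         finite {z. Lax n Jm Jp (gauge a D b) z \<noteq> C * Lax n Jm Jp D (t * z) * minv C})"
proof -
  note n = assms(1)
  have aq: "\<forall>i. a (i + int n) = m * a i" and anz: "\<forall>i. a i \<noteq> 0"
    using assms(8) by (auto simp: quasiperiodic_inv_def)
  have bq: "\<forall>i. b (i + int n) = m * b i" and bnz: "\<forall>i. b i \<noteq> 0"
    using assms(9) by (auto simp: quasiperiodic_inv_def)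
  have m: "m \<noteq> 0" using aq anz by (metis mult_zero_left)
  define A where "A = dg n (\<lambda>r. a (int r + 1))"
  define Ai where "Ai = dg n (\<lambda>r. 1 / a (int r + 1))"
  define B where "B = dg n (\<lambda>r. b (int r + 1))"
  define Bi where "Bi = dg n (\<lambda>r. 1 / b (int r + 1))"
  have AAi: "A * Ai = 1\<^sub>m n" "Ai * A = 1\<^sub>m n" unfolding A_def Ai_def using dg_inv anz by auto
  have BBi: "B * Bi = 1\<^sub>m n" "Bi * B = 1\<^sub>m n" unfolding B_def Bi_def using dg_inv bnz by auto
  have car: "A \<in> carrier_mat n n" "Ai \<in> carrier_mat n n" "B \<in> carrier_mat n n" "Bi \<in> carrier_mat n n"
    unfolding A_def Ai_def B_def Bi_def by auto
  have og: "\<And>J z. opmat n J (gauge a D b) z = A * opmat n J D (z/m) * Bi"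
    unfolding A_def Bi_def by (rule opmat_gauge[OF m bq n bnz])
  have P1: "DO n (Jm \<union> Jp) (gauge a D b)"
    unfolding DO_def periodic_seq_def
  proof (intro ballI allI)
    fix j i assume j: "j \<in> Jm \<union> Jp"
    have Dp: "D j (i + int n) = D j i" using assms(5) j by (auto simp: DO_def periodic_seq_def)
    have "b (i + int n + j) = m * b (i + j)" using bq[rule_format, of "i + j"] by (simp add: ac_simps)
    then show "gauge a D b j (i + int n) = gauge a D b j i"
      using Dp aq m by (simp add: gauge_def)
  qed
  have detA: "det A \<noteq> 0" "det Bi \<noteq> 0"
  proof -
    have "det A * det Ai = 1" using det_mult[OF car(1,2)] AAi by simp
    then show "det A \<noteq> 0" by auto
    have "det B * det Bi = 1" using det_mult[OF car(3,4)] BBi by simp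
    then show "det Bi \<noteq> 0" by auto
  qed
  have gi: "generic_inv (opmat n J (gauge a D b))" if g: "generic_inv (opmat n J D)" for J
  proof -
    obtain z0 where z0: "det (opmat n J D z0) \<noteq> 0" using g by (auto simp: generic_inv_def)
    have "opmat n J (gauge a D b) (m * z0) = A * opmat n J D z0 * Bi" using og m by simp
    then have "det (opmat n J (gauge a D b) (m * z0)) = det A * det (opmat n J D z0) * det Bi"
      using det_mult[OF mult_carrier_mat[OF car(1) opmat_carrier] car(4)] det_mult[OF car(1) opmat_carrier] by simp
    then show ?thesis using z0 detA unfolding generic_inv_def by (metis mult_eq_0_iff)
  qed
  have mc: "\<And>X Y. X \<in> carrier_mat n n \<Longrightarrow> Y \<in> carrier_mat n n \<Longrightarrow> X * Y \<in> carrier_mat n n"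
    by auto
  have as: "\<And>X Y Z. X \<in> carrier_mat n n \<Longrightarrow> Y \<in> carrier_mat n n \<Longrightarrow> Z \<in> carrier_mat n n \<Longrightarrow> X * Y * Z = X * (Y * Z)"
    by (rule assoc_mult_mat)
  have mB: "minv B = Bi" by (rule minv_eq[OF car(3,4) BBi])
  have idB: "inv_diag n B" unfolding inv_diag_def B_def using bnz by (auto simp: dg_def)
  have L: "Lax n Jm Jp (gauge a D b) z = B * Lax n Jm Jp D ((1/m) * z) * minv B" for z
  proof -
    have zz: "(1/m) * z = z / m" by simp
    let ?Mm = "opmat n Jm D (z/m)" and ?Mp = "opmat n Jp D (z/m)"
    have c2: "?Mm \<in> carrier_mat n n" "?Mp \<in> carrier_mat n n" "minv ?Mm \<in> carrier_mat n n"
      by (auto intro: minv_carrier)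
    have "Lax n Jm Jp (gauge a D b) z = minv (A * ?Mm * Bi) * (A * ?Mp * Bi)"
      by (simp add: Lax_def og)
    also have "\<dots> = (B * minv ?Mm * Ai) * (A * ?Mp * Bi)"
      by (simp add: minv_conj[OF car c2(1) AAi BBi])
    also have "\<dots> = B * (minv ?Mm * (Ai * A) * ?Mp) * Bi"
      using car c2 by (simp add: as mc)
    also have "\<dots> = B * (minv ?Mm * ?Mp) * Bi"
      using car c2 AAi by simp
    finally show ?thesis unfolding zz mB Lax_def .
  qed
  have fin: "finite {z. Lax n Jm Jp (gauge a D b) z \<noteq> B * Lax n Jm Jp D ((1/m) * z) * minv B}"
    using L by simp
  show ?thesis using P1 gi[OF assms(6)] gi[OF assms(7)] idB m fin
    by (intro conjI exI[of _ B] exI[of _ "1/m"]) auto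
qed

end
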